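(* Let $E$ be a CM field that is a finite Galois extension of $\mathbb{Q}$ with Galois group $G$, with a fixed embedding $E\hookrightarrow\mathbb{C}$, and let $V$ be a finite-dimensional $E$-vector space. Let $\mathfrak{k}$ be a semisimple $\mathbb{Q}$-Lie subalgebra of $\mathfrak{sl}_E(V)$ and $\mathfrak{k}_\mathbb{C}=\mathfrak{k}\otimes_\mathbb{Q}\mathbb{C}$. Suppose: (I) there exists $\sigma_0\in G$ such that $P_{\sigma_0}(\mathfrak{k}_\mathbb{C})=\mathfrak{sl}_\mathbb{C}(V_{\sigma_0})$; (II) for each pair $(\sigma,\tau)\in G^2$ with $\sigma\neq\tau$ and $\sigma\neq\bar\tau$, there exists $\kappa\in G$ such that, with $\sigma_0=\kappa\sigma$, $\tau_0=\kappa\tau$, one has $P_{\sigma_0,\tau_0}(\mathfrak{k}_\mathbb{C})=\mathfrak{sl}_\mathbb{C}(V_{\sigma_0})\oplus\mathfrak{sl}_\mathbb{C}(V_{\tau_0})$. Then $\dim_\mathbb{Q}\mathfrak{k}\ge \frac12[E:\mathbb{Q}]\big((\dim_E V)^2-1\big)$.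
   Context: $V_\mathbb{C}=V\otimes_\mathbb{Q}\mathbb{C}=\bigoplus_{\sigma\in G}V_\sigma$, where (identifying $\sigma\in G$ with the embedding $E\xrightarrow{\sigma}E\subset\mathbb{C}$) $V_\sigma=\{w\in V_\mathbb{C}:(e\otimes1)w=\sigma(e)w\ \forall e\in E\}$. For a commutative ring $R$ and free $R$-module $N$ of finite rank, $\mathfrak{sl}_R(N)$ is the Lie algebra of trace-zero $R$-endomorphisms. One has $\mathfrak{sl}_E(V)\otimes_\mathbb{Q}\mathbb{C}=\bigoplus_{\sigma\in G}\mathfrak{sl}_\mathbb{C}(V_\sigma)$; $P_\sigma$ denotes the projection onto $\mathfrak{sl}_\mathbb{C}(V_\sigma)$ and, for $\sigma\ne\tau$, $P_{\sigma,\tau}$ the projection onto $\mathfrak{sl}_\mathbb{C}(V_\sigma)\oplus\mathfrak{sl}_\mathbb{C}(V_\tau)$. For $\sigma\in G$, $\bar\sigma$ denotes the composition of $\sigma$ with complex conjugation of $E$. *)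

theory Defs
  imports "HOL-Analysis.Analysis"
begin

definition qscalec :: "rat \<Rightarrow> complex \<Rightarrow> complex" where
  "qscalec q z = of_rat q * z"

definition qscale :: "rat \<Rightarrow> complex^'n^'n \<Rightarrow> complex^'n^'n" where
  "qscale q A = (\<chi> i j. of_rat q * A $ i $ j)"

definition cscale :: "complex \<Rightarrow> complex^'n^'n \<Rightarrow> complex^'n^'n" where
  "cscale c A = (\<chi> i j. c * A $ i $ j)"

definition cscale2 :: "complex \<Rightarrow> (complex^'n^'n) \<times> (complex^'n^'n)
    \<Rightarrow> (complex^'n^'n) \<times> (complex^'n^'n)" where
  "cscale2 c P = (cscale c (fst P), cscale c (snd P))"

definition qdeg :: "complex set \<Rightarrow> nat" where
  "qdeg E = vector_space.dim qscalec E"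

definition qdim :: "(complex^'n^'n) set \<Rightarrow> nat" where
  "qdim K = vector_space.dim qscale K"

definition subfield_C :: "complex set \<Rightarrow> bool" where
  "subfield_C E \<longleftrightarrow> 0 \<in> E \<and> 1 \<in> E \<and>
     (\<forall>x\<in>E. \<forall>y\<in>E. x + y \<in> E \<and> x * y \<in> E) \<and>
     (\<forall>x\<in>E. - x \<in> E \<and> inverse x \<in> E)"

definition finite_over_Q :: "complex set \<Rightarrow> bool" where
  "finite_over_Q E \<longleftrightarrow> (\<exists>B. finite B \<and> B \<subseteq> E \<and> module.span qscalec B = E)"

definition field_hom_on :: "complex set \<Rightarrow> (complex \<Rightarrow> complex) \<Rightarrow> bool" where
  "field_hom_on F \<phi> \<longleftrightarrow> \<phi> 1 = 1 \<and>
     (\<forall>x\<in>F. \<forall>y\<in>F. \<phi> (x + y) = \<phi> x + \<phi> y \<and> \<phi> (x * y) = \<phi> x * \<phi> y)"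

text \<open>The automorphism group Gal(E/Q), automorphisms being extended by the identity
  outside E.\<close>

definition aut :: "complex set \<Rightarrow> (complex \<Rightarrow> complex) set" where
  "aut E = {\<sigma>. field_hom_on E \<sigma> \<and> bij_betw \<sigma> E E \<and> (\<forall>x. x \<notin> E \<longrightarrow> \<sigma> x = x)}"

definition galois_over_Q :: "complex set \<Rightarrow> bool" where
  "galois_over_Q E \<longleftrightarrow> subfield_C E \<and> finite_over_Q E \<and> card (aut E) = qdeg E"

definition totally_real :: "complex set \<Rightarrow> bool" where
  "totally_real F \<longleftrightarrow> (\<forall>\<phi>. field_hom_on F \<phi> \<longrightarrow> \<phi> ` F \<subseteq> \<real>)"

definition totally_imaginary :: "complex set \<Rightarrow> bool" where
  "totally_imaginary E \<longleftrightarrow> (\<forall>\<phi>. field_hom_on E \<phi> \<longrightarrow> \<not> \<phi> ` E \<subseteq> \<real>)"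

definition degree_two_over :: "complex set \<Rightarrow> complex set \<Rightarrow> bool" where
  "degree_two_over E F \<longleftrightarrow> (\<exists>b1\<in>E. \<exists>b2\<in>E.
      \<forall>x\<in>E. \<exists>!(c1, c2). c1 \<in> F \<and> c2 \<in> F \<and> x = c1 * b1 + c2 * b2)"

definition CM_field :: "complex set \<Rightarrow> bool" where
  "CM_field E \<longleftrightarrow> subfield_C E \<and> finite_over_Q E \<and> totally_imaginary E \<and>
     (\<exists>F. subfield_C F \<and> F \<subseteq> E \<and> totally_real F \<and> degree_two_over E F)"

definition conj_aut :: "complex set \<Rightarrow> (complex \<Rightarrow> complex) \<Rightarrow> complex \<Rightarrow> complex" where
  "conj_aut E \<sigma> = (\<lambda>x. if x \<in> E then cnj (\<sigma> x) else x)"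

text \<open>V = E^n with n = CARD('n); End_E(V) = n x n matrices with entries in E.\<close>

definition sl_E :: "complex set \<Rightarrow> (complex^'n^'n) set" where
  "sl_E E = {A. (\<forall>i j. A $ i $ j \<in> E) \<and> trace A = 0}"

definition sl_C :: "(complex^'n^'n) set" where
  "sl_C = {A. trace A = 0}"

definition bracket :: "complex^'n^'n \<Rightarrow> complex^'n^'n \<Rightarrow> complex^'n^'n" where
  "bracket A B = A ** B - B ** A"

definition lie_subalgebra_Q :: "(complex^'n^'n) set \<Rightarrow> bool" where
  "lie_subalgebra_Q K \<longleftrightarrow> module.subspace qscale K \<and> (\<forall>A\<in>K. \<forall>B\<in>K. bracket A B \<in> K)"

definition lie_ideal_Q :: "(complex^'n^'n) set \<Rightarrow> (complex^'n^'n) set \<Rightarrow> bool" where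
  "lie_ideal_Q K I \<longleftrightarrow> module.subspace qscale I \<and> I \<subseteq> K \<and> (\<forall>A\<in>K. \<forall>B\<in>I. bracket A B \<in> I)"

fun derived :: "(complex^'n^'n) set \<Rightarrow> nat \<Rightarrow> (complex^'n^'n) set" where
  "derived I 0 = I"
| "derived I (Suc m) = module.span qscale {bracket A B | A B. A \<in> derived I m \<and> B \<in> derived I m}"

definition solvable_Q :: "(complex^'n^'n) set \<Rightarrow> bool" where
  "solvable_Q I \<longleftrightarrow> (\<exists>m. derived I m \<subseteq> {0})"

definition semisimple_Q :: "(complex^'n^'n) set \<Rightarrow> bool" where
  "semisimple_Q K \<longleftrightarrow> lie_subalgebra_Q K \<and>
     (\<forall>I. lie_ideal_Q K I \<and> solvable_Q I \<longrightarrow> I = {0})"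

text \<open>Entrywise application of an embedding sigma; under
  sl_E(V) (x)_Q C = (+)_sigma sl_C(V_sigma) the sigma-component of X (x) 1 is apply_emb sigma X.\<close>

definition apply_emb :: "(complex \<Rightarrow> complex) \<Rightarrow> complex^'n^'n \<Rightarrow> complex^'n^'n" where
  "apply_emb \<sigma> A = (\<chi> i j. \<sigma> (A $ i $ j))"

definition P1 :: "(complex \<Rightarrow> complex) \<Rightarrow> (complex^'n^'n) set \<Rightarrow> (complex^'n^'n) set" where
  "P1 \<sigma> K = module.span cscale (apply_emb \<sigma> ` K)"

definition P2 :: "(complex \<Rightarrow> complex) \<Rightarrow> (complex \<Rightarrow> complex) \<Rightarrow> (complex^'n^'n) set
    \<Rightarrow> ((complex^'n^'n) \<times> (complex^'n^'n)) set" where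
  "P2 \<sigma> \<tau> K = module.span cscale2 ((\<lambda>X. (apply_emb \<sigma> X, apply_emb \<tau> X)) ` K)"

end

theory Submission
  imports Defs "HOL-Library.Function_Algebras"
begin


definition Em :: "'n \<Rightarrow> 'n \<Rightarrow> complex^'n^'n" where
  "Em a b = (\<chi> i j. if i = a \<and> j = b then 1 else 0)"

lemma Em_nth[simp]: "Em a b $ i $ j = (if i = a \<and> j = b then 1 else 0)"
  by (simp add: Em_def)

lemma Em_mult_left[simp]: "(Em a b ** y) $ i $ j = (if i = a then y $ b $ j else 0)"
  by (simp add: matrix_matrix_mult_def if_distrib[of "\<lambda>x. x * _"] cong: if_cong)

lemma Em_mult_right[simp]: "(y ** Em a b) $ i $ j = (if j = b then y $ i $ a else 0)"
  by (simp add: matrix_matrix_mult_def if_distrib[of "\<lambda>x. _ * x"] cong: if_cong)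

lemma trace_Em: "trace (Em a b) = (if a = b then 1 else 0)"
  by (cases "a = b") (auto simp: trace_def intro!: sum.neutral)

lemma cscale_nth[simp]: "cscale c A $ i $ j = c * A $ i $ j"
  by (simp add: cscale_def)

lemma bracket_nth[simp]: "bracket A B $ i $ j = (A ** B) $ i $ j - (B ** A) $ i $ j"
  by (simp add: bracket_def)

lemma Em_sl: "a \<noteq> b \<Longrightarrow> Em a b \<in> sl_C"
  by (simp add: sl_C_def trace_Em)

lemma Em_diff_sl: "Em a a - Em b b \<in> sl_C"
  by (simp add: sl_C_def trace_def sum_subtractf)

definition ideal_sl :: "(complex^'n^'n) set \<Rightarrow> bool" where
  "ideal_sl I \<longleftrightarrow> I \<subseteq> sl_C \<and> 0 \<in> I \<and> (\<forall>x\<in>I. \<forall>y\<in>I. x + y \<in> I) \<and>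
     (\<forall>c. \<forall>x\<in>I. cscale c x \<in> I) \<and> (\<forall>z\<in>sl_C. \<forall>x\<in>I. bracket z x \<in> I)"

lemma br_anti: "bracket x z = cscale (-1) (bracket z x)"
  by (simp add: vec_eq_iff)

lemma br1: "a \<noteq> b \<Longrightarrow> bracket (Em b a) (bracket (Em b a) y) = cscale (-2 * y$a$b) (Em b a)"
  by (auto simp add: vec_eq_iff)

lemma br2: "\<forall>i j. i \<noteq> j \<longrightarrow> y$i$j = 0 \<Longrightarrow>
   bracket (Em a b) y = cscale (y$b$b - y$a$a) (Em a b)"
  by (auto simp add: vec_eq_iff)

lemma br3: "i \<noteq> j \<Longrightarrow> bracket (Em i k) (Em k j) = Em i j"
  by (auto simp add: vec_eq_iff)

lemma br4: "i \<noteq> j \<Longrightarrow> bracket (Em i j) (Em j i) = Em i i - Em j j"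
  by (auto simp add: vec_eq_iff)

lemma cscale_cscale[simp]: "cscale c (cscale d X) = cscale (c*d) X"
  by (simp add: vec_eq_iff)

lemma cscale_one[simp]: "cscale 1 X = X"
  by (simp add: vec_eq_iff)

lemma ideal_sum: "finite S \<Longrightarrow> ideal_sl I \<Longrightarrow> (\<forall>x\<in>S. f x \<in> I) \<Longrightarrow> sum f S \<in> I"
  by (induct S rule: finite_induct) (auto simp: ideal_sl_def)

lemma ideal_scale: "ideal_sl I \<Longrightarrow> x \<in> I \<Longrightarrow> cscale c x \<in> I"
  by (auto simp: ideal_sl_def)

lemma ideal_br: "ideal_sl I \<Longrightarrow> x \<in> I \<Longrightarrow> z \<in> sl_C \<Longrightarrow> bracket z x \<in> I"
  by (auto simp: ideal_sl_def)

lemma ideal_brr: "ideal_sl I \<Longrightarrow> x \<in> I \<Longrightarrow> z \<in> sl_C \<Longrightarrow> bracket x z \<in> I"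
  by (subst br_anti) (auto simp: ideal_sl_def)

lemma ideal_scale_inv: "ideal_sl I \<Longrightarrow> cscale c x \<in> I \<Longrightarrow> c \<noteq> 0 \<Longrightarrow> x \<in> I"
  using ideal_scale[of I "cscale c x" "inverse c"] by simp

lemma sl_simple:
  fixes y :: "complex^'n^'n"
  assumes I: "ideal_sl I" and y: "y \<in> I" "y \<noteq> 0"
  shows "sl_C \<subseteq> I"
proof -
  have yC: "y \<in> sl_C" using I y by (auto simp: ideal_sl_def)
  have "\<exists>a b. a \<noteq> b \<and> Em a b \<in> I"
  proof (cases "\<exists>a b. a \<noteq> b \<and> y$a$b \<noteq> 0")
    case True
    then obtain a b where ab: "a \<noteq> b" "y$a$b \<noteq> 0" by blast
    have "bracket (Em b a) (bracket (Em b a) y) \<in> I"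
      using I y ab by (intro ideal_br) (auto simp: Em_sl)
    then have "cscale (-2 * y$a$b) (Em b a) \<in> I" using br1[OF ab(1)] by simp
    then have "Em b a \<in> I" by (rule ideal_scale_inv[OF I]) (use ab in auto)
    then show ?thesis using ab(1) by (intro exI[of _ b] exI[of _ a]) simp
  next
    case False
    then have diag: "\<forall>i j. i \<noteq> j \<longrightarrow> y$i$j = 0" by blast
    have "\<exists>i j. y$i$j \<noteq> 0"
    proof (rule ccontr)
      assume "\<not> (\<exists>i j. y$i$j \<noteq> 0)"
      then have "y = 0" by (simp add: vec_eq_iff)
      then show False using y(2) by simp
    qed
    then obtain a a' where "y$a$a' \<noteq> 0" by blast
    then have a: "y$a$a \<noteq> 0" using diag by (cases "a = a'") auto
    have "\<exists>b. y$b$b \<noteq> y$a$a"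
    proof (rule ccontr)
      assume "\<not> ?thesis"
      then have H: "\<And>b. y$b$b = y$a$a" by blast
      obtain c where c: "c = y$a$a" by blast
      have H': "\<And>b. y$b$b = c" using H c by blast
      have "trace y = of_nat CARD('n) * c" by (simp add: trace_def H')
      then have "trace y = of_nat CARD('n) * y$a$a" using c by simp
      moreover have "trace y = 0" using yC by (simp add: sl_C_def)
      ultimately show False using a by simp
    qed
    then obtain b where b: "y$b$b \<noteq> y$a$a" by blast
    then have ab: "a \<noteq> b" by auto
    have "bracket (Em a b) y \<in> I"
      using I y ab by (intro ideal_br) (auto simp: Em_sl)
    then have "cscale (y$b$b - y$a$a) (Em a b) \<in> I" using br2[OF diag] by simp
    then have "Em a b \<in> I" by (rule ideal_scale_inv[OF I]) (use b in auto)
    then show ?thesis using ab by (intro exI[of _ a] exI[of _ b]) simp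
  qed
  then obtain a b where ab: "a \<noteq> b" "Em a b \<in> I" by blast
  have row: "Em a j \<in> I" if "j \<noteq> a" for j
  proof (cases "j = b")
    case True then show ?thesis using ab by simp
  next
    case False
    have "bracket (Em a b) (Em b j) \<in> I" using I ab False by (intro ideal_brr) (auto simp: Em_sl)
    then show ?thesis using br3[OF that[symmetric]] by simp
  qed
  have all: "Em i j \<in> I" if "i \<noteq> j" for i j
  proof (cases "i = a")
    case True then show ?thesis using row that by simp
  next
    case ia: False
    show ?thesis
    proof (cases "j = a")
      case True
      have "bracket (Em i a) (bracket (Em i a) (Em a i)) \<in> I"
        using I row ia by (intro ideal_br) (auto simp: Em_sl)
      then have "cscale (-2) (Em i a) \<in> I" using br1[of a i "Em a i"] ia by simp
      then have "Em i a \<in> I" by (rule ideal_scale_inv[OF I]) simp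
      then show ?thesis using True by simp
    next
      case False
      have "bracket (Em i a) (Em a j) \<in> I"
        using I row ia False by (intro ideal_br) (auto simp: Em_sl)
      then show ?thesis using br3[OF that] by simp
    qed
  qed
  have diag: "Em i i - Em j j \<in> I" for i j
  proof (cases "i = j")
    case True then show ?thesis using I by (simp add: ideal_sl_def)
  next
    case False
    have "bracket (Em i j) (Em j i) \<in> I"
      using I all False by (intro ideal_br) (auto simp: Em_sl)
    then show ?thesis using br4[OF False] by simp
  qed
  show ?thesis
  proof
    fix A :: "complex^'n^'n" assume A: "A \<in> sl_C"
    define T where "T i j = (if i \<noteq> j then cscale (A$i$j) (Em i j)
        else cscale (A$i$i) (Em i i - Em a a))" for i j
    have Tnth: "T i j $ p $ q = (if j = q then (if i = p then A$i$j else 0) else 0)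
        - (if j = i then (if p = a \<and> q = a then A$i$i else 0) else 0)" for i j p q
      by (auto simp: T_def)
    have "A = (\<Sum>i\<in>UNIV. \<Sum>j\<in>UNIV. T i j)"
    proof -
      have "(\<Sum>i\<in>UNIV. \<Sum>j\<in>UNIV. T i j) $ p $ q = A $ p $ q" for p q
      proof -
        have "(\<Sum>i\<in>UNIV. \<Sum>j\<in>UNIV. T i j) $ p $ q
            = (\<Sum>i\<in>UNIV. \<Sum>j\<in>UNIV. T i j $ p $ q)" by simp
        also have "\<dots> = (\<Sum>i\<in>UNIV. (if i = p then A$i$q else 0)
             - (if p = a \<and> q = a then A$i$i else 0))"
          by (simp add: Tnth sum_subtractf)
        also have "\<dots> = A $ p $ q - (if p = a \<and> q = a then trace A else 0)"
          by (cases "p = a \<and> q = a") (auto simp add: sum_subtractf trace_def)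
        also have "\<dots> = A $ p $ q" using A by (simp add: sl_C_def)
        finally show ?thesis .
      qed
      then show ?thesis by (simp add: vec_eq_iff)
    qed
    moreover have "(\<Sum>i\<in>UNIV. \<Sum>j\<in>UNIV. T i j) \<in> I"
      using I all diag by (intro ideal_sum ballI) (auto simp: T_def intro: ideal_scale[OF I])
    ultimately show "A \<in> I" by simp
  qed
qed


lemma bracket_0[simp]: "bracket 0 A = 0" "bracket A 0 = 0"
  by (simp_all add: bracket_def)

lemma matrix_add_rdistrib': "((A::'a::semiring_1^'n^'m) + B) ** C = A ** C + B ** C"
  by (vector matrix_matrix_mult_def sum.distrib[symmetric] field_simps)

lemma bracket_add_right: "bracket z (x + y) = bracket z x + bracket z y"
  by (simp add: bracket_def matrix_add_ldistrib matrix_add_rdistrib')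

lemma bracket_add_left: "bracket (x + y) z = bracket x z + bracket y z"
  by (simp add: bracket_def matrix_add_ldistrib matrix_add_rdistrib')

lemma cscale_mult_left: "cscale c A ** B = cscale c (A ** B)"
  by (simp add: vec_eq_iff matrix_matrix_mult_def sum_distrib_left mult.assoc)

lemma cscale_mult_right: "A ** cscale c B = cscale c (A ** B)"
  by (simp add: vec_eq_iff matrix_matrix_mult_def sum_distrib_left algebra_simps)

lemma bracket_scale_right: "bracket z (cscale c x) = cscale c (bracket z x)"
  by (simp add: bracket_def cscale_mult_left cscale_mult_right vec_eq_iff algebra_simps)

lemma bracket_scale_left: "bracket (cscale c x) z = cscale c (bracket x z)"
  by (simp add: bracket_def cscale_mult_left cscale_mult_right vec_eq_iff algebra_simps)

lemma cscale_zero[simp]: "cscale c 0 = 0"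
  by (simp add: vec_eq_iff)

lemma sl_zero: "0 \<in> sl_C"
  by (simp add: sl_C_def trace_def)

lemma sl_add: "x \<in> sl_C \<Longrightarrow> y \<in> sl_C \<Longrightarrow> x + y \<in> sl_C"
  by (simp add: sl_C_def trace_def sum.distrib)

lemma sl_scale: "x \<in> sl_C \<Longrightarrow> cscale c x \<in> sl_C"
  by (simp add: sl_C_def trace_def sum_distrib_left[symmetric])

lemma sl_diff: "x \<in> sl_C \<Longrightarrow> y \<in> sl_C \<Longrightarrow> x - y \<in> sl_C"
  by (simp add: sl_C_def trace_def sum_subtractf)

lemma exists_two: "CARD('n::finite) \<ge> 2 \<Longrightarrow> \<exists>a b::'n. a \<noteq> b"
proof (rule ccontr)
  assume c: "CARD('n) \<ge> 2" and "\<not> (\<exists>a b::'n. a \<noteq> b)"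
  then have "\<forall>a b::'n. a = b" by blast
  then have "(UNIV::'n set) = {undefined}" by auto
  then have "CARD('n) = card {undefined::'n}" by (rule arg_cong)
  then have "CARD('n) = 1" by simp
  with c show False by simp
qed

lemma center_trivial:
  fixes u :: "complex^'n^'n"
  assumes n2: "CARD('n) \<ge> 2" and u: "u \<in> sl_C" and c: "\<forall>y\<in>sl_C. bracket u y = 0"
  shows "u = 0"
proof (rule ccontr)
  assume nz: "u \<noteq> 0"
  define Z :: "(complex^'n^'n) set" where "Z = {v \<in> sl_C. \<forall>y\<in>sl_C. bracket y v = 0}"
  have "ideal_sl Z"
    unfolding ideal_sl_def Z_def
    by (auto simp: sl_zero sl_add sl_scale bracket_add_right bracket_scale_right)
  moreover have "u \<in> Z"
  proof -
    have "bracket y u = 0" if "y \<in> sl_C" for y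
    proof -
      have "bracket y u = cscale (-1) (bracket u y)" by (rule br_anti)
      then show ?thesis using c that by simp
    qed
    then show ?thesis using u unfolding Z_def by blast
  qed
  ultimately have "sl_C \<subseteq> Z" using nz sl_simple by blast
  obtain a b :: 'n where ab: "a \<noteq> b" using exists_two[OF n2] by blast
  have "Em a b \<in> Z" using \<open>sl_C \<subseteq> Z\<close> Em_sl[OF ab] by blast
  then have "bracket (Em b a) (Em a b) = 0" using Em_sl[of b a] ab unfolding Z_def by auto
  moreover have "bracket (Em b a) (Em a b) $ b $ b = 1" using ab by simp
  ultimately show False by simp
qed

lemma fun_sum_apply: "(sum f A) x = sum (\<lambda>a. f a x) A"
  by (induct A rule: infinite_finite_induct) auto


context
  fixes E :: "complex set"
  assumes sf: "subfield_C E"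
begin

lemma sf_0: "0 \<in> E" and sf_1: "1 \<in> E"
  using sf by (auto simp: subfield_C_def)

lemma sf_add: "x \<in> E \<Longrightarrow> y \<in> E \<Longrightarrow> x + y \<in> E"
  and sf_mult: "x \<in> E \<Longrightarrow> y \<in> E \<Longrightarrow> x * y \<in> E"
  and sf_neg: "x \<in> E \<Longrightarrow> - x \<in> E"
  and sf_inv: "x \<in> E \<Longrightarrow> inverse x \<in> E"
  using sf by (auto simp: subfield_C_def)

lemma sf_diff: "x \<in> E \<Longrightarrow> y \<in> E \<Longrightarrow> x - y \<in> E"
  using sf_add sf_neg by (metis diff_conv_add_uminus)

lemma sf_sum: "(\<And>a. a \<in> A \<Longrightarrow> f a \<in> E) \<Longrightarrow> sum f A \<in> E"
  by (induct A rule: infinite_finite_induct) (auto intro: sf_add sf_0)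

lemma sf_prod: "(\<And>a. a \<in> A \<Longrightarrow> f a \<in> E) \<Longrightarrow> prod f A \<in> E"
  by (induct A rule: infinite_finite_induct) (auto intro: sf_mult sf_1)

lemma sf_of_nat: "of_nat n \<in> E"
  by (induct n) (auto intro: sf_add sf_0 sf_1)

lemma sf_of_int: "of_int z \<in> E"
proof (cases "z \<ge> 0")
  case True
  then show ?thesis using sf_of_nat[of "nat z"] by simp
next
  case False
  then have "of_int z = - (of_nat (nat (- z)) :: complex)" by simp
  then show ?thesis using sf_neg[OF sf_of_nat[of "nat (- z)"]] by simp
qed

lemma sf_of_rat: "of_rat q \<in> E"
proof -
  obtain a b where q: "q = Fract a b" "b > 0" by (cases q) auto
  have "(of_rat q :: complex) = of_int a * inverse (of_int b)"
    using q by (simp add: of_rat_rat divide_inverse)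
  then show ?thesis using sf_mult[OF sf_of_int sf_inv[OF sf_of_int]] by simp
qed

context
  fixes \<sigma> :: "complex \<Rightarrow> complex"
  assumes h: "field_hom_on E \<sigma>"
begin

lemma hom_1: "\<sigma> 1 = 1" using h by (simp add: field_hom_on_def)

lemma hom_add: "x \<in> E \<Longrightarrow> y \<in> E \<Longrightarrow> \<sigma> (x + y) = \<sigma> x + \<sigma> y"
  and hom_mult: "x \<in> E \<Longrightarrow> y \<in> E \<Longrightarrow> \<sigma> (x * y) = \<sigma> x * \<sigma> y"
  using h by (auto simp: field_hom_on_def)

lemma hom_0: "\<sigma> 0 = 0"
  using hom_add[OF sf_0 sf_0] by simp

lemma hom_neg: "x \<in> E \<Longrightarrow> \<sigma> (- x) = - \<sigma> x"
proof -
  assume x: "x \<in> E"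
  have "\<sigma> x + \<sigma> (- x) = 0" using hom_add[OF x sf_neg[OF x]] hom_0 by simp
  then show ?thesis by (simp add: eq_neg_iff_add_eq_0 add.commute)
qed

lemma hom_diff: "x \<in> E \<Longrightarrow> y \<in> E \<Longrightarrow> \<sigma> (x - y) = \<sigma> x - \<sigma> y"
  using hom_add[of x "- y"] hom_neg[of y] sf_neg by simp

lemma hom_sum: "(\<And>a. a \<in> A \<Longrightarrow> f a \<in> E) \<Longrightarrow> \<sigma> (sum f A) = (\<Sum>a\<in>A. \<sigma> (f a))"
  by (induct A rule: infinite_finite_induct) (auto simp: hom_0 hom_add sf_sum)

lemma hom_prod: "(\<And>a. a \<in> A \<Longrightarrow> f a \<in> E) \<Longrightarrow> \<sigma> (prod f A) = (\<Prod>a\<in>A. \<sigma> (f a))"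
  by (induct A rule: infinite_finite_induct) (auto simp: hom_1 hom_mult sf_prod)

lemma hom_of_nat: "\<sigma> (of_nat n) = of_nat n"
  by (induct n) (auto simp: hom_0 hom_1 hom_add sf_of_nat sf_1)

lemma hom_of_int: "\<sigma> (of_int z) = of_int z"
proof (cases "z \<ge> 0")
  case True
  then show ?thesis using hom_of_nat[of "nat z"] by simp
next
  case False
  then have "of_int z = - (of_nat (nat (- z)) :: complex)" by simp
  then show ?thesis using hom_neg[OF sf_of_nat[of "nat (- z)"]] hom_of_nat[of "nat (-z)"] False by simp
qed

lemma hom_of_rat: "\<sigma> (of_rat q) = of_rat q"
proof -
  obtain a b where q: "q = Fract a b" "b > 0" by (cases q) auto
  have e: "(of_rat q :: complex) * of_int b = of_int a"
    using q by (simp add: of_rat_rat)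
  have "\<sigma> (of_rat q) * of_int b = of_int a"
    using hom_mult[OF sf_of_rat sf_of_int, of q b] e hom_of_int by simp
  then have "\<sigma> (of_rat q) = of_int a / of_int b" using q by (simp add: field_simps)
  then show ?thesis using q by (simp add: of_rat_rat)
qed

end
end

lemma aut_hom: "\<sigma> \<in> aut E \<Longrightarrow> field_hom_on E \<sigma>"
  by (simp add: aut_def)

lemma aut_mem: "\<sigma> \<in> aut E \<Longrightarrow> x \<in> E \<Longrightarrow> \<sigma> x \<in> E"
  by (auto simp: aut_def bij_betw_def)

definition ME :: "complex set \<Rightarrow> (complex^'n^'n) set" where
  "ME E = {X. \<forall>i j. X$i$j \<in> E}"

lemma qscale_nth[simp]: "qscale q A $ i $ j = of_rat q * A $ i $ j"
  by (simp add: qscale_def)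

lemma apply_emb_nth[simp]: "apply_emb \<sigma> A $ i $ j = \<sigma> (A $ i $ j)"
  by (simp add: apply_emb_def)

context
  fixes E :: "complex set"
  assumes sf: "subfield_C E"
begin

lemma ME_add: "X \<in> ME E \<Longrightarrow> Y \<in> ME E \<Longrightarrow> X + Y \<in> ME E"
  by (simp add: ME_def sf_add[OF sf])

lemma ME_qscale: "X \<in> ME E \<Longrightarrow> qscale q X \<in> ME E"
  by (simp add: ME_def sf_mult[OF sf] sf_of_rat[OF sf])

lemma ME_mult: "X \<in> ME E \<Longrightarrow> Y \<in> ME E \<Longrightarrow> X ** Y \<in> ME E"
  by (simp add: ME_def matrix_matrix_mult_def sf_sum[OF sf] sf_mult[OF sf])

lemma ME_bracket: "X \<in> ME E \<Longrightarrow> Y \<in> ME E \<Longrightarrow> bracket X Y \<in> ME E"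
  using ME_mult[of X Y] ME_mult[of Y X] by (simp add: ME_def bracket_def sf_diff[OF sf])

lemma slE_ME: "sl_E E \<subseteq> ME E"
  by (auto simp: sl_E_def ME_def)

lemma ME_emb: "\<sigma> \<in> aut E \<Longrightarrow> X \<in> ME E \<Longrightarrow> apply_emb \<sigma> X \<in> ME E"
  by (simp add: ME_def aut_mem)

context
  fixes \<sigma> :: "complex \<Rightarrow> complex"
  assumes h: "field_hom_on E \<sigma>"
begin

lemma ae_zero: "apply_emb \<sigma> 0 = 0"
  by (simp add: vec_eq_iff hom_0[OF sf h])

lemma ae_add: "X \<in> ME E \<Longrightarrow> Y \<in> ME E \<Longrightarrow> apply_emb \<sigma> (X + Y) = apply_emb \<sigma> X + apply_emb \<sigma> Y"
  by (simp add: vec_eq_iff ME_def hom_add[OF sf h])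

lemma ae_qscale: "X \<in> ME E \<Longrightarrow> apply_emb \<sigma> (qscale q X) = cscale (of_rat q) (apply_emb \<sigma> X)"
  by (simp add: vec_eq_iff ME_def hom_mult[OF sf h] sf_of_rat[OF sf] hom_of_rat[OF sf h])

lemma ae_mult: "X \<in> ME E \<Longrightarrow> Y \<in> ME E \<Longrightarrow> apply_emb \<sigma> (X ** Y) = apply_emb \<sigma> X ** apply_emb \<sigma> Y"
  by (simp add: vec_eq_iff ME_def matrix_matrix_mult_def hom_sum[OF sf h] hom_mult[OF sf h]
      sf_mult[OF sf])

lemma ae_bracket: "X \<in> ME E \<Longrightarrow> Y \<in> ME E \<Longrightarrow>
    apply_emb \<sigma> (bracket X Y) = bracket (apply_emb \<sigma> X) (apply_emb \<sigma> Y)"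
  using ME_mult[of X Y] ME_mult[of Y X]
  by (simp add: vec_eq_iff bracket_def ME_def hom_diff[OF sf h] ae_mult[symmetric])

lemma ae_sl: "X \<in> sl_E E \<Longrightarrow> apply_emb \<sigma> X \<in> sl_C"
  by (simp add: sl_E_def sl_C_def trace_def hom_sum[OF sf h, symmetric] hom_0[OF sf h])

end
end

definition fscale :: "complex \<Rightarrow> ((complex\<Rightarrow>complex) \<Rightarrow> complex^'n^'n) \<Rightarrow> ((complex\<Rightarrow>complex) \<Rightarrow> complex^'n^'n)" where
  "fscale c x = (\<lambda>\<rho>. cscale c (x \<rho>))"

interpretation qs: vector_space "qscale :: rat \<Rightarrow> complex^'n^'n \<Rightarrow> complex^'n^'n"
  by unfold_locales (simp_all add: vec_eq_iff qscale_def algebra_simps of_rat_add of_rat_mult)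

interpretation qc: vector_space "qscalec"
  by unfold_locales (simp_all add: qscalec_def algebra_simps of_rat_add of_rat_mult)

interpretation cs: vector_space "cscale :: complex \<Rightarrow> complex^'n^'n \<Rightarrow> complex^'n^'n"
  by unfold_locales (simp_all add: vec_eq_iff cscale_def algebra_simps)

interpretation cs2: vector_space "cscale2 :: complex \<Rightarrow> (complex^'n^'n) \<times> (complex^'n^'n) \<Rightarrow> _"
  by unfold_locales (simp_all add: vec_eq_iff cscale2_def cscale_def algebra_simps)

interpretation fs: vector_space "fscale :: complex \<Rightarrow> ((complex\<Rightarrow>complex) \<Rightarrow> complex^'n^'n) \<Rightarrow> _"
  by unfold_locales (simp_all add: vec_eq_iff fscale_def cscale_def fun_eq_iff algebra_simps)


lemma goursat:
  fixes L :: "((complex \<Rightarrow> complex) \<Rightarrow> complex^'n^'n) set" and S :: "(complex\<Rightarrow>complex) set"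
  assumes n2: "CARD('n) \<ge> 2"
    and L0: "0 \<in> L" and Ladd: "\<And>x y. x \<in> L \<Longrightarrow> y \<in> L \<Longrightarrow> x + y \<in> L"
    and Lscale: "\<And>c x. x \<in> L \<Longrightarrow> (\<lambda>\<rho>. cscale c (x \<rho>)) \<in> L"
    and Lbr: "\<And>x y. x \<in> L \<Longrightarrow> y \<in> L \<Longrightarrow> (\<lambda>\<rho>. bracket (x \<rho>) (y \<rho>)) \<in> L"
    and Lsl: "\<And>x \<rho>. x \<in> L \<Longrightarrow> \<rho> \<in> S \<Longrightarrow> x \<rho> \<in> sl_C"
    and single: "\<And>\<sigma> a. \<sigma> \<in> S \<Longrightarrow> a \<in> sl_C \<Longrightarrow> \<exists>x\<in>L. x \<sigma> = a"
    and pair: "\<And>\<sigma> \<tau> a b. \<sigma> \<in> S \<Longrightarrow> \<tau> \<in> S \<Longrightarrow> \<sigma> \<noteq> \<tau> \<Longrightarrow> a \<in> sl_C \<Longrightarrow> b \<in> sl_C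
       \<Longrightarrow> \<exists>x\<in>L. x \<sigma> = a \<and> x \<tau> = b"
  shows "finite T \<Longrightarrow> T \<subseteq> S \<Longrightarrow> (\<forall>g. (\<forall>\<sigma>\<in>T. g \<sigma> \<in> sl_C) \<longrightarrow> (\<exists>x\<in>L. \<forall>\<sigma>\<in>T. x \<sigma> = g \<sigma>))"
proof (induct T rule: finite_induct)
  case empty
  show ?case using L0 by blast
next
  case (insert m T)
  have mS: "m \<in> S" and TS: "T \<subseteq> S" using insert by auto
  have IH: "\<And>g. \<forall>\<sigma>\<in>T. g \<sigma> \<in> sl_C \<Longrightarrow> \<exists>x\<in>L. \<forall>\<sigma>\<in>T. x \<sigma> = g \<sigma>"
    using insert TS by blast
  have Lsum: "finite F \<Longrightarrow> (\<forall>t\<in>F. f t \<in> L) \<Longrightarrow> sum f F \<in> L" for F and f :: "(complex \<Rightarrow> complex) \<Rightarrow> (complex \<Rightarrow> complex) \<Rightarrow> complex^'n^'n"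
    by (induct F rule: finite_induct) (auto intro: Ladd L0)
  have Ldiff: "x - y \<in> L" if "x \<in> L" "y \<in> L" for x y
  proof -
    have e: "x - y = x + (\<lambda>\<rho>. cscale (-1) (y \<rho>))" by (simp add: fun_eq_iff vec_eq_iff)
    have "x + (\<lambda>\<rho>. cscale (-1) (y \<rho>)) \<in> L" using that by (intro Ladd Lscale)
    then show ?thesis by (subst e)
  qed
  define I :: "(complex^'n^'n) set" where "I = {y. \<exists>x\<in>L. (\<forall>\<sigma>\<in>T. x \<sigma> = 0) \<and> x m = y}"
  have idI: "ideal_sl I"
    unfolding ideal_sl_def
  proof (intro conjI ballI allI)
    show "I \<subseteq> sl_C" using Lsl mS unfolding I_def by blast
    show "0 \<in> I" unfolding I_def using L0 by (intro CollectI bexI[of _ 0]) auto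
  next
    fix x y :: "complex^'n^'n" assume "x \<in> I" "y \<in> I"
    then obtain u v where "u \<in> L" "\<forall>\<sigma>\<in>T. u \<sigma> = 0" "u m = x" "v \<in> L" "\<forall>\<sigma>\<in>T. v \<sigma> = 0" "v m = y"
      unfolding I_def by blast
    then show "x + y \<in> I" unfolding I_def by (intro CollectI bexI[of _ "u + v"]) (auto intro: Ladd)
  next
    fix c and x :: "complex^'n^'n" assume "x \<in> I"
    then obtain u where "u \<in> L" "\<forall>\<sigma>\<in>T. u \<sigma> = 0" "u m = x"
      unfolding I_def by blast
    then show "cscale c x \<in> I" unfolding I_def
      by (intro CollectI bexI[of _ "\<lambda>\<rho>. cscale c (u \<rho>)"]) (auto intro: Lscale)
  next
    fix z x :: "complex^'n^'n" assume "z \<in> sl_C" "x \<in> I"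
    then obtain u where "u \<in> L" "\<forall>\<sigma>\<in>T. u \<sigma> = 0" "u m = x"
      unfolding I_def by blast
    moreover obtain v where "v \<in> L" "v m = z" using single[OF mS \<open>z \<in> sl_C\<close>] by blast
    ultimately show "bracket z x \<in> I" unfolding I_def
      by (intro CollectI bexI[of _ "\<lambda>\<rho>. bracket (v \<rho>) (u \<rho>)"]) (auto intro: Lbr)
  qed
  show ?case
  proof (cases "\<exists>y\<in>I. y \<noteq> 0")
    case True
    then have slI: "sl_C \<subseteq> I" using sl_simple idI by blast
    show ?thesis
    proof (intro allI impI)
      fix g :: "(complex \<Rightarrow> complex) \<Rightarrow> complex^'n^'n" assume g: "\<forall>\<sigma>\<in>insert m T. g \<sigma> \<in> sl_C"
      have gT: "\<forall>\<sigma>\<in>T. g \<sigma> \<in> sl_C" using g by blast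
      obtain x where x: "x \<in> L" "\<forall>\<sigma>\<in>T. x \<sigma> = g \<sigma>" using IH[OF gT] by blast
      have "g m - x m \<in> sl_C" using g x Lsl mS by (auto intro: sl_diff)
      then obtain x' where x': "x' \<in> L" "\<forall>\<sigma>\<in>T. x' \<sigma> = 0" "x' m = g m - x m"
        using slI unfolding I_def by blast
      show "\<exists>x\<in>L. \<forall>\<sigma>\<in>insert m T. x \<sigma> = g \<sigma>"
      proof (rule bexI[of _ "x + x'"])
        show "x + x' \<in> L" using x(1) x'(1) by (rule Ladd)
        show "\<forall>\<sigma>\<in>insert m T. (x + x') \<sigma> = g \<sigma>"
        proof
          fix \<sigma> assume \<sigma>: "\<sigma> \<in> insert m T"
          show "(x + x') \<sigma> = g \<sigma>"
          proof (cases "\<sigma> = m")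
            case True
            then show ?thesis using x'(3) by simp
          next
            case False
            then have "\<sigma> \<in> T" using \<sigma> by simp
            then show ?thesis using x(2) x'(2) by simp
          qed
        qed
      qed
    qed
  next
    case False
    then have I0: "x m = 0" if "x \<in> L" "\<forall>\<sigma>\<in>T. x \<sigma> = 0" for x
      using that unfolding I_def by blast
    have wm: "w m = 0" if w: "w \<in> L" "t \<in> T" "\<forall>\<sigma>\<in>T. \<sigma> \<noteq> t \<longrightarrow> w \<sigma> = 0" for w t
    proof -
      have "\<forall>y\<in>sl_C. bracket (w m) y = 0"
      proof
        fix y :: "complex^'n^'n" assume y: "y \<in> sl_C"
        have "t \<noteq> m" using w insert by auto
        obtain x where x: "x \<in> L" "x t = 0" "x m = y"
        proof -
          have tS: "t \<in> S" using w(2) TS by auto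
          show ?thesis using pair[OF tS mS \<open>t \<noteq> m\<close> sl_zero y] that by blast
        qed
        have "(\<lambda>\<rho>. bracket (w \<rho>) (x \<rho>)) \<in> L" using Lbr w x by auto
        moreover have "\<forall>\<sigma>\<in>T. bracket (w \<sigma>) (x \<sigma>) = 0"
        proof
          fix \<sigma> assume "\<sigma> \<in> T"
          then show "bracket (w \<sigma>) (x \<sigma>) = 0" using w x by (cases "\<sigma> = t") auto
        qed
        ultimately have "bracket (w m) (x m) = 0" using I0[of "\<lambda>\<rho>. bracket (w \<rho>) (x \<rho>)"] by simp
        then show "bracket (w m) y = 0" using x by simp
      qed
      moreover have "w m \<in> sl_C" using Lsl w mS by auto
      ultimately show "w m = 0" using center_trivial n2 by blast
    qed
    have allzero: "x m = 0" if x: "x \<in> L" for x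
    proof -
      have "\<forall>t\<in>T. \<exists>w. w \<in> L \<and> (\<forall>\<sigma>\<in>T. w \<sigma> = (if \<sigma> = t then x t else 0))"
      proof
        fix t assume t: "t \<in> T"
        have "\<forall>\<sigma>\<in>T. (if \<sigma> = t then x t else 0) \<in> sl_C"
          using Lsl[OF x] TS t sl_zero by auto
        from IH[OF this] show "\<exists>w. w \<in> L \<and> (\<forall>\<sigma>\<in>T. w \<sigma> = (if \<sigma> = t then x t else 0))"
          by blast
      qed
      then have "\<exists>W. \<forall>t\<in>T. W t \<in> L \<and> (\<forall>\<sigma>\<in>T. W t \<sigma> = (if \<sigma> = t then x t else 0))"
        by (rule bchoice)
      then obtain W where W: "\<forall>t\<in>T. W t \<in> L \<and> (\<forall>\<sigma>\<in>T. W t \<sigma> = (if \<sigma> = t then x t else 0))"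
        by blast
      have Wm: "\<forall>t\<in>T. W t m = 0" using wm W by auto
      define u where "u = sum W T"
      have uL: "u \<in> L" unfolding u_def using insert(1) W by (intro Lsum) auto
      have uT: "u \<sigma> = x \<sigma>" if "\<sigma> \<in> T" for \<sigma>
      proof -
        have "u \<sigma> = (\<Sum>t\<in>T. W t \<sigma>)" by (simp add: u_def fun_sum_apply)
        also have "\<dots> = (\<Sum>t\<in>T. if \<sigma> = t then x t else 0)"
          using W that by (intro sum.cong) auto
        also have "\<dots> = x \<sigma>" using that insert(1) by simp
        finally show ?thesis .
      qed
      have um: "u m = 0"
      proof -
        have "u m = (\<Sum>t\<in>T. W t m)" by (simp add: u_def fun_sum_apply)
        also have "\<dots> = 0" using Wm by simp
        finally show ?thesis .
      qed
      have "(x - u) m = 0" using I0[of "x - u"] Ldiff[OF x uL] uT by simp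
      then show ?thesis using um by simp
    qed
    obtain a b :: 'n where ab: "a \<noteq> b" using exists_two[OF n2] by blast
    obtain x where x: "x \<in> L" "x m = Em a b" using single[OF mS Em_sl[OF ab]] by blast
    have "Em a b \<noteq> 0"
    proof
      assume "Em a b = 0"
      then have "Em a b $ a $ b = 0" by simp
      then show False by simp
    qed
    then show ?thesis using allzero[OF x(1)] x(2) by simp
  qed
qed


definition iota :: "(complex^'n^'n) \<times> (complex^'n^'n) \<Rightarrow> complex^('n \<times> 'n \<times> bool)" where
  "iota P = (\<chi> k. if snd (snd k) then snd P $ fst k $ fst (snd k) else fst P $ fst k $ fst (snd k))"

lemma iota_nth[simp]: "iota P $ (i, j, b) = (if b then snd P $ i $ j else fst P $ i $ j)"
  by (simp add: iota_def)

lemma iota_inj: "iota P = iota Q \<Longrightarrow> P = Q"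
proof -
  assume e: "iota P = iota Q"
  have "fst P $ i $ j = fst Q $ i $ j \<and> snd P $ i $ j = snd Q $ i $ j" for i j
    using arg_cong[OF e, of "\<lambda>v. v $ (i, j, False)"] arg_cong[OF e, of "\<lambda>v. v $ (i, j, True)"]
    by simp
  then show "P = Q" by (simp add: prod_eq_iff vec_eq_iff)
qed

lemma iota_hom: "module_hom cscale2 (*s) iota"
  by unfold_locales
    (auto simp: vec_eq_iff cscale2_def cscale_def algebra_simps iota_def)

lemma span_iota: "vec.span (iota ` W) = iota ` cs2.span W"
  by (rule module_hom.span_image[OF iota_hom])

abbreviation "nn \<equiv> (undefined :: 'n)"

definition e1 :: "complex^('n::finite \<times> 'n \<times> bool)" where "e1 = axis (nn, nn, False) 1"
definition e2 :: "complex^('n::finite \<times> 'n \<times> bool)" where "e2 = axis (nn, nn, True) 1"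

lemma e1_nth[simp]: "e1 $ (i, j, b) = (if i = nn \<and> j = nn \<and> \<not> b then 1 else 0)"
  by (auto simp: e1_def axis_def)

lemma e2_nth[simp]: "e2 $ (i, j, b) = (if i = nn \<and> j = nn \<and> b then 1 else 0)"
  by (auto simp: e2_def axis_def)

lemma H_subspace: "cs2.subspace (sl_C \<times> sl_C)"
  by (auto simp: cs2.subspace_def cscale2_def sl_zero sl_add sl_scale zero_prod_def)

lemma cscale_Em_nth: "cscale z (Em i j) $ p $ q = (if j = q then (if i = p then z else 0) else 0)"
  by auto

lemma trace_sub_Em: "trace (A - cscale k (Em nn nn)) = trace A - k"
  by (simp add: trace_def sum_subtractf cscale_Em_nth del: cscale_nth Em_nth)

lemma D1:
  fixes W :: "((complex^'n^'n) \<times> (complex^'n^'n)) set"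
  assumes W: "W \<subseteq> sl_C \<times> sl_C"
  shows "cs2.span W = sl_C \<times> sl_C \<longleftrightarrow> vec.span (insert e1 (insert e2 (iota ` W))) = UNIV"
proof
  assume eq: "cs2.span W = sl_C \<times> sl_C"
  show "vec.span (insert e1 (insert e2 (iota ` W))) = UNIV"
  proof (rule set_eqI, rule iffI)
    fix v :: "complex^('n \<times> 'n \<times> bool)"
    define A :: "complex^'n^'n" where "A = (\<chi> i j. v $ (i, j, False))"
    define B :: "complex^'n^'n" where "B = (\<chi> i j. v $ (i, j, True))"
    define A' where "A' = A - cscale (trace A) (Em nn nn)"
    define B' where "B' = B - cscale (trace B) (Em nn nn)"
    have "(A', B') \<in> sl_C \<times> sl_C"
      by (simp add: A'_def B'_def sl_C_def trace_sub_Em)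
    then have "iota (A', B') \<in> vec.span (iota ` W)" using eq span_iota by auto
    then have s: "iota (A', B') \<in> vec.span (insert e1 (insert e2 (iota ` W)))"
      using vec.span_mono[of "iota ` W" "insert e1 (insert e2 (iota ` W))"] by auto
    have ve: "v = iota (A', B') + trace A *s e1 + trace B *s e2"
      unfolding vec_eq_iff
    proof
      fix k :: "'n \<times> 'n \<times> bool"
      obtain i j b where k: "k = (i, j, b)" by (cases k) auto
      show "v $ k = (iota (A', B') + trace A *s e1 + trace B *s e2) $ k"
        by (cases b) (auto simp: k A'_def B'_def A_def B_def)
    qed
    show "v \<in> vec.span (insert e1 (insert e2 (iota ` W)))"
      by (subst ve) (intro vec.span_add vec.span_scale s vec.span_base; simp)
  qed simp
next
  assume full: "vec.span (insert e1 (insert e2 (iota ` W))) = UNIV"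
  have sub: "cs2.span W \<subseteq> sl_C \<times> sl_C" by (rule cs2.span_minimal[OF W H_subspace])
  show "cs2.span W = sl_C \<times> sl_C"
  proof (rule antisym[OF sub], rule subsetI)
    fix P :: "(complex^'n^'n) \<times> (complex^'n^'n)" assume P: "P \<in> sl_C \<times> sl_C"
    obtain A B where AB: "P = (A, B)" by (cases P) auto
    have "iota P \<in> vec.span (insert e1 (insert e2 (iota ` W)))" using full by simp
    then obtain k1 where "iota P - k1 *s e1 \<in> vec.span (insert e2 (iota ` W))"
      unfolding vec.span_insert[of e1] by blast
    then obtain k2 where "iota P - k1 *s e1 - k2 *s e2 \<in> vec.span (iota ` W)"
      unfolding vec.span_insert[of e2] by blast
    then obtain Q where Q: "Q \<in> cs2.span W" "iota Q = iota P - k1 *s e1 - k2 *s e2"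
      unfolding span_iota by auto
    have "iota P - k1 *s e1 - k2 *s e2 = iota (A - cscale k1 (Em nn nn), B - cscale k2 (Em nn nn))"
      unfolding vec_eq_iff
    proof
      fix k :: "'n \<times> 'n \<times> bool"
      obtain i j b where k: "k = (i, j, b)" by (cases k) auto
      show "(iota P - k1 *s e1 - k2 *s e2) $ k = iota (A - cscale k1 (Em nn nn), B - cscale k2 (Em nn nn)) $ k"
        by (cases b) (auto simp: k AB)
    qed
    then have Qe: "Q = (A - cscale k1 (Em nn nn), B - cscale k2 (Em nn nn))"
      using Q(2) iota_inj by metis
    have "Q \<in> sl_C \<times> sl_C" using Q(1) sub by auto
    then have "k1 = 0" "k2 = 0" using P AB Qe by (auto simp: sl_C_def trace_sub_Em)
    then have "Q = P" using Qe AB by (simp add: vec_eq_iff)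
    then show "P \<in> cs2.span W" using Q(1) by simp
  qed
qed

lemma D2:
  fixes V :: "(complex^'m) set"
  shows "vec.span V = UNIV \<longleftrightarrow> (\<exists>A::complex^'m^'m. (\<forall>k. A$k \<in> V) \<and> det A \<noteq> 0)"
proof
  assume full: "vec.span V = UNIV"
  obtain B where B: "B \<subseteq> V" "vec.independent B" "V \<subseteq> vec.span B"
    using vec.maximal_independent_subset[of V] by blast
  have "UNIV \<subseteq> vec.span B" using full vec.span_mono[OF B(3)] by (simp add: vec.span_span)
  then have spB: "vec.span B = UNIV" by auto
  have "card B = vec.dim (UNIV :: (complex^'m) set)"
    using vec.basis_card_eq_dim[of B UNIV] B spB by auto
  then have cB: "card B = CARD('m)" by (simp add: card_cart_basis)
  have fB: "finite B" using vec.finiteI_independent[OF B(2)] .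
  obtain f where f: "bij_betw f (UNIV :: 'm set) B"
    using finite_same_card_bij[of "UNIV :: 'm set" B] fB cB by auto
  define A :: "complex^'m^'m" where "A = (\<chi> k. f k)"
  have rowA: "row k A = f k" for k by (simp add: A_def row_def vec_eq_iff)
  have "rows A = B" using f unfolding rows_def rowA bij_betw_def by auto
  then have "vec.span (rows A) = UNIV" using spB by simp
  then obtain A' :: "complex^'m^'m" where "A' ** A = mat 1"
    using matrix_left_invertible_span_rows_gen[of A] by blast
  then have "invertible A" using matrix_left_right_inverse[of A A'] by (auto simp: invertible_def)
  then have "det A \<noteq> 0" using invertible_det_nz by blast
  moreover have "\<forall>k. A$k \<in> V" using f B(1) by (auto simp: A_def bij_betw_def)
  ultimately show "\<exists>A::complex^'m^'m. (\<forall>k. A$k \<in> V) \<and> det A \<noteq> 0" by blast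
next
  assume "\<exists>A::complex^'m^'m. (\<forall>k. A$k \<in> V) \<and> det A \<noteq> 0"
  then obtain A :: "complex^'m^'m" where A: "\<forall>k. A$k \<in> V" "det A \<noteq> 0" by blast
  then have "invertible A" using invertible_det_nz by blast
  then obtain A' where "A' ** A = mat 1" by (auto simp: invertible_def)
  then have "vec.span (rows A) = UNIV" using matrix_left_invertible_span_rows_gen[of A] by blast
  moreover have "rows A \<subseteq> V"
  proof
    fix r assume "r \<in> rows A"
    then obtain k where "r = row k A" by (auto simp: rows_def)
    moreover have "row k A = A $ k" by (simp add: row_def vec_eq_iff)
    ultimately show "r \<in> V" using A by simp
  qed
  ultimately show "vec.span V = UNIV" using vec.span_mono[of "rows A" V] by auto
qed

lemma D3:
  assumes sf: "subfield_C E" and h: "field_hom_on E \<kappa>" and A: "\<forall>i j. A$i$j \<in> E"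
  shows "det (\<chi> i j. \<kappa> (A$i$j)) = \<kappa> (det A)"
proof -
  have pE: "prod (\<lambda>i. A $ i $ p i) UNIV \<in> E" for p
    using A by (intro sf_prod[OF sf]) auto
  have "\<kappa> (det A) = (\<Sum>p\<in>{p. p permutes UNIV}. \<kappa> (of_int (sign p) * prod (\<lambda>i. A $ i $ p i) UNIV))"
    unfolding det_def using pE by (intro hom_sum[OF sf h]) (auto intro: sf_mult[OF sf] sf_of_int[OF sf])
  also have "\<dots> = (\<Sum>p\<in>{p. p permutes UNIV}. of_int (sign p) * prod (\<lambda>i. \<kappa> (A $ i $ p i)) UNIV)"
    using pE A by (intro sum.cong refl)
      (simp add: hom_mult[OF sf h] sf_of_int[OF sf] hom_of_int[OF sf h] hom_prod[OF sf h])
  also have "\<dots> = det (\<chi> i j. \<kappa> (A$i$j))" by (simp add: det_def)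
  finally show ?thesis by simp
qed


lemma pick_half:
  fixes f :: "'a \<Rightarrow> 'a"
  assumes "finite A" "x0 \<in> A" "\<forall>x\<in>A. f x \<noteq> x" "\<forall>x\<in>A. f (f x) = x"
  shows "\<exists>S\<subseteq>A. x0 \<in> S \<and> card A \<le> 2 * card S \<and> (\<forall>x\<in>S. f x \<notin> S)"
  using assms
proof (induct "card A" arbitrary: A x0 rule: less_induct)
  case less
  define A' where "A' = A - {x0, f x0}"
  have c2: "card {x0, f x0} \<le> 2" by (simp add: card_insert_if)
  show ?case
  proof (cases "A' = {}")
    case True
    then have "A \<subseteq> {x0, f x0}" by (auto simp: A'_def)
    then have "card A \<le> card {x0, f x0}" by (intro card_mono) auto
    then have "card A \<le> 2 * card {x0}" using c2 by simp
    moreover have "\<forall>x\<in>{x0}. f x \<notin> {x0}" using less.prems by auto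
    ultimately show ?thesis using less.prems by blast
  next
    case False
    then obtain x1 where x1: "x1 \<in> A'" by blast
    have fA': "finite A'" using less.prems by (simp add: A'_def)
    have "A' \<subset> A" using less.prems by (auto simp: A'_def)
    then have lt: "card A' < card A" using less.prems by (intro psubset_card_mono) auto
    have "\<exists>S\<subseteq>A'. x1 \<in> S \<and> card A' \<le> 2 * card S \<and> (\<forall>x\<in>S. f x \<notin> S)"
      using less.hyps[OF lt fA' x1] less.prems by (auto simp: A'_def)
    then obtain S' where S': "S' \<subseteq> A'" "x1 \<in> S'" "card A' \<le> 2 * card S'" "\<forall>x\<in>S'. f x \<notin> S'"
      by blast
    have fS': "finite S'" using S'(1) fA' finite_subset by blast
    have x0S': "x0 \<notin> S'" using S'(1) by (auto simp: A'_def)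
    have "A \<subseteq> A' \<union> {x0, f x0}" by (auto simp: A'_def)
    then have "card A \<le> card (A' \<union> {x0, f x0})" using fA' by (intro card_mono) auto
    also have "\<dots> \<le> card A' + card {x0, f x0}" by (rule card_Un_le)
    finally have "card A \<le> card A' + 2" using c2 by simp
    moreover have "card (insert x0 S') = card S' + 1" using fS' x0S' by simp
    ultimately have "card A \<le> 2 * card (insert x0 S')" using S'(3) by simp
    moreover have "\<forall>x\<in>insert x0 S'. f x \<notin> insert x0 S'"
    proof
      fix x assume x: "x \<in> insert x0 S'"
      show "f x \<notin> insert x0 S'"
      proof (cases "x = x0")
        case True
        then show ?thesis using less.prems S'(1) by (auto simp: A'_def)
      next
        case False
        then have xS: "x \<in> S'" using x by simp
        have "f x \<noteq> x0"
        proof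
          assume "f x = x0"
          then have "f x0 = x" using less.prems S'(1) xS by (auto simp: A'_def)
          then show False using S'(1) xS by (auto simp: A'_def)
        qed
        then show ?thesis using S'(4) xS by simp
      qed
    qed
    moreover have "insert x0 S' \<subseteq> A" using S'(1) less.prems by (auto simp: A'_def)
    ultimately show ?thesis by blast
  qed
qed

lemma conj_aut_invol: "\<sigma> \<in> aut E \<Longrightarrow> conj_aut E (conj_aut E \<sigma>) = \<sigma>"
  by (auto simp: fun_eq_iff conj_aut_def aut_def)

lemma conj_aut_ne:
  assumes ti: "totally_imaginary E" and s: "\<sigma> \<in> aut E"
  shows "conj_aut E \<sigma> \<noteq> \<sigma>"
proof
  assume eq: "conj_aut E \<sigma> = \<sigma>"
  have "\<sigma> x \<in> \<real>" if "x \<in> E" for x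
  proof -
    have "cnj (\<sigma> x) = \<sigma> x" using fun_cong[OF eq, of x] that by (simp add: conj_aut_def)
    then show ?thesis by (simp add: Reals_cnj_iff)
  qed
  then have "\<sigma> ` E \<subseteq> \<real>" by blast
  moreover have "field_hom_on E \<sigma>" using s by (simp add: aut_def)
  ultimately show False using ti by (auto simp: totally_imaginary_def)
qed


lemma matrix_decomp: "X = (\<Sum>i\<in>UNIV. \<Sum>j\<in>UNIV. cscale (X$i$j) (Em i j))"
  by (simp add: vec_eq_iff cscale_Em_nth del: cscale_nth Em_nth)

lemma ME_span:
  assumes sf: "subfield_C E" and fo: "finite_over_Q E"
  shows "\<exists>F0. finite F0 \<and> (ME E :: (complex^'n^'n) set) \<subseteq> qs.span F0"
proof -
  obtain B where B: "finite B" "B \<subseteq> E" "qc.span B = E"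
    using fo by (auto simp: finite_over_Q_def)
  define g :: "'n \<Rightarrow> 'n \<Rightarrow> complex \<Rightarrow> complex^'n^'n" where "g i j z = cscale z (Em i j)" for i j z
  have gh: "module_hom qscalec qscale (g i j)" for i j
    by unfold_locales (simp_all add: g_def vec_eq_iff qscalec_def qscale_def algebra_simps
        of_rat_add of_rat_mult)
  define F0 where "F0 = (\<lambda>(i, j, b). g i j b) ` (UNIV \<times> UNIV \<times> B)"
  have fF0: "finite F0" using B(1) by (simp add: F0_def)
  have "X \<in> qs.span F0" if X: "X \<in> ME E" for X
  proof -
    have "g i j (X$i$j) \<in> qs.span F0" for i j
    proof -
      have "X$i$j \<in> qc.span B" using X B(3) by (simp add: ME_def)
      then have "g i j (X$i$j) \<in> qs.span (g i j ` B)"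
        using module_hom.span_image[OF gh[of i j], of B] by auto
      moreover have "g i j ` B \<subseteq> F0"
      proof
        fix z assume "z \<in> g i j ` B"
        then obtain b where b: "b \<in> B" "z = g i j b" by blast
        show "z \<in> F0" unfolding F0_def using b by (intro image_eqI[of _ _ "(i, j, b)"]) auto
      qed
      ultimately show ?thesis using qs.span_mono by blast
    qed
    then have "(\<Sum>i\<in>UNIV. \<Sum>j\<in>UNIV. g i j (X$i$j)) \<in> qs.span F0"
      by (intro qs.span_sum) auto
    then show ?thesis using matrix_decomp[of X] by (simp add: g_def)
  qed
  then show ?thesis using fF0 by blast
qed

lemma ev_hom: "module_hom fscale cscale (\<lambda>x. x \<sigma>)"
  by unfold_locales (simp_all add: fscale_def vec_eq_iff cscale_def fun_eq_iff algebra_simps)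

lemma ev2_hom: "module_hom fscale cscale2 (\<lambda>x. (x \<sigma>, x \<tau>))"
  by unfold_locales (simp_all add: fscale_def vec_eq_iff cscale_def cscale2_def fun_eq_iff algebra_simps)

lemma fst_hom: "module_hom cscale2 cscale fst"
  by unfold_locales (simp_all add: vec_eq_iff cscale_def cscale2_def algebra_simps)

lemma U_nth:
  assumes "p \<noteq> (nn, nn)" "(i0, j0) \<noteq> (nn, nn)"
  shows "(if fst p = snd p then Em (fst p) (fst p) - Em nn nn else Em (fst p) (snd p)) $ i0 $ j0
     = (if p = (i0, j0) then 1 else 0)"
  using assms by (cases p) auto

lemma aemb_slE:
  assumes sf: "subfield_C E" and s: "\<sigma> \<in> aut E" and X: "X \<in> sl_E E"
  shows "apply_emb \<sigma> X \<in> sl_E E"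
  using ae_sl[OF sf aut_hom[OF s] X] X aut_mem[OF s] by (auto simp: sl_E_def sl_C_def)

lemma transport:
  fixes K :: "(complex^'n^'n) set"
  assumes sf: "subfield_C E" and s: "\<sigma> \<in> aut E" "\<tau> \<in> aut E" "\<kappa> \<in> aut E"
    and KE: "K \<subseteq> sl_E E"
    and full: "P2 (\<kappa> \<circ> \<sigma>) (\<kappa> \<circ> \<tau>) K = sl_C \<times> sl_C"
  shows "P2 \<sigma> \<tau> K = sl_C \<times> sl_C"
proof -
  define W where "W = (\<lambda>X. (apply_emb \<sigma> X, apply_emb \<tau> X)) ` K"
  define W' where "W' = (\<lambda>X. (apply_emb (\<kappa> \<circ> \<sigma>) X, apply_emb (\<kappa> \<circ> \<tau>) X)) ` K"
  have hk: "field_hom_on E \<kappa>" using s(3) by (rule aut_hom)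
  have emb_comp: "apply_emb (\<kappa> \<circ> \<rho>) X = apply_emb \<kappa> (apply_emb \<rho> X)" for \<rho> X
    by (simp add: apply_emb_def)
  have W'sub: "W' \<subseteq> sl_C \<times> sl_C"
  proof
    fix P assume "P \<in> W'"
    then obtain X where X: "X \<in> K" "P = (apply_emb (\<kappa> \<circ> \<sigma>) X, apply_emb (\<kappa> \<circ> \<tau>) X)"
      by (auto simp: W'_def)
    have "apply_emb \<sigma> X \<in> sl_E E" "apply_emb \<tau> X \<in> sl_E E"
      using aemb_slE[OF sf s(1)] aemb_slE[OF sf s(2)] X KE by auto
    then have "apply_emb \<kappa> (apply_emb \<sigma> X) \<in> sl_C" "apply_emb \<kappa> (apply_emb \<tau> X) \<in> sl_C"
      using ae_sl[OF sf hk] by auto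
    then show "P \<in> sl_C \<times> sl_C" using X(2) by (simp add: emb_comp)
  qed
  have Wsub: "W \<subseteq> sl_C \<times> sl_C"
    using ae_sl[OF sf aut_hom[OF s(1)]] ae_sl[OF sf aut_hom[OF s(2)]] KE by (auto simp: W_def)
  have "cs2.span W' = sl_C \<times> sl_C" using full by (simp add: P2_def W'_def)
  then have "vec.span (insert e1 (insert e2 (iota ` W'))) = UNIV" using D1[OF W'sub] by simp
  then obtain A :: "complex^('n \<times> 'n \<times> bool)^('n \<times> 'n \<times> bool)"
    where A: "\<forall>k. A$k \<in> insert e1 (insert e2 (iota ` W'))" "det A \<noteq> 0"
    using D2 by blast
  define kap :: "complex^('n \<times> 'n \<times> bool) \<Rightarrow> complex^('n \<times> 'n \<times> bool)"
    where "kap v = (\<chi> l. \<kappa> (v $ l))" for v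
  have k01: "\<kappa> (if c then 1 else 0) = (if c then 1 else 0)" for c
    using hom_0[OF sf hk] hom_1[OF sf hk] by simp
  have kape1: "kap e1 = e1" unfolding kap_def e1_def axis_def by (simp add: k01 vec_eq_iff)
  have kape2: "kap e2 = e2" unfolding kap_def e2_def axis_def by (simp add: k01 vec_eq_iff)
  have e1E: "\<forall>l. e1 $ l \<in> E" and e2E: "\<forall>l. e2 $ l \<in> E"
    using sf_0[OF sf] sf_1[OF sf] by (auto simp: e1_def e2_def axis_def)
  have rowex: "\<forall>k. \<exists>r. r \<in> insert e1 (insert e2 (iota ` W)) \<and> A$k = kap r \<and> (\<forall>l. r$l \<in> E)"
  proof
    fix k
    consider "A$k = e1" | "A$k = e2" | "A$k \<in> iota ` W'" using A(1) by blast
    then show "\<exists>r. r \<in> insert e1 (insert e2 (iota ` W)) \<and> A$k = kap r \<and> (\<forall>l. r$l \<in> E)"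
    proof cases
      case 1
      then show ?thesis using kape1 e1E by (intro exI[of _ e1]) simp
    next
      case 2
      then show ?thesis using kape2 e2E by (intro exI[of _ e2]) simp
    next
      case 3
      then obtain X where X: "X \<in> K" "A$k = iota (apply_emb (\<kappa> \<circ> \<sigma>) X, apply_emb (\<kappa> \<circ> \<tau>) X)"
        by (auto simp: W'_def)
      define r where "r = iota (apply_emb \<sigma> X, apply_emb \<tau> X)"
      have XE: "\<forall>i j. X$i$j \<in> E" using X(1) KE by (auto simp: sl_E_def)
      have "r \<in> iota ` W" using X(1) by (simp add: r_def W_def)
      moreover have "A$k = kap r"
        unfolding vec_eq_iff
      proof
        fix l :: "'n \<times> 'n \<times> bool"
        obtain i j b where l: "l = (i, j, b)" by (cases l) auto
        show "A$k$l = kap r $ l" using X(2) by (cases b) (simp_all add: l kap_def r_def)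
      qed
      moreover have "\<forall>l. r$l \<in> E"
      proof
        fix l :: "'n \<times> 'n \<times> bool"
        obtain i j b where l: "l = (i, j, b)" by (cases l) auto
        show "r$l \<in> E" using XE aut_mem[OF s(1)] aut_mem[OF s(2)] by (simp add: l r_def)
      qed
      ultimately show ?thesis by blast
    qed
  qed
  then have "\<exists>R. \<forall>k. R k \<in> insert e1 (insert e2 (iota ` W)) \<and> A$k = kap (R k) \<and> (\<forall>l. R k $ l \<in> E)"
    by (rule choice)
  then obtain R where R: "\<forall>k. R k \<in> insert e1 (insert e2 (iota ` W)) \<and> A$k = kap (R k) \<and> (\<forall>l. R k $ l \<in> E)"
    by blast
  define M :: "complex^('n \<times> 'n \<times> bool)^('n \<times> 'n \<times> bool)" where "M = (\<chi> k. R k)"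
  have AM: "A = (\<chi> i j. \<kappa> (M$i$j))" using R by (simp add: vec_eq_iff M_def kap_def)
  have ME': "\<forall>i j. M$i$j \<in> E" using R by (simp add: M_def)
  have "det A = \<kappa> (det M)" unfolding AM by (rule D3[OF sf hk ME'])
  then have "det M \<noteq> 0" using A(2) hom_0[OF sf hk] by auto
  moreover have "\<forall>k. M$k \<in> insert e1 (insert e2 (iota ` W))" using R by (simp add: M_def)
  ultimately have "vec.span (insert e1 (insert e2 (iota ` W))) = UNIV" using D2 by blast
  then have "cs2.span W = sl_C \<times> sl_C" using D1[OF Wsub] by simp
  then show ?thesis by (simp add: P2_def W_def)
qed


lemma dim_bound:
  fixes K :: "(complex^'n^'n) set" and E :: "complex set" and S :: "(complex \<Rightarrow> complex) set"
  assumes sf: "subfield_C E" and fo: "finite_over_Q E" and KE: "K \<subseteq> sl_E E"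
    and Ksub: "qs.subspace K" and Kbr: "\<forall>X\<in>K. \<forall>Y\<in>K. bracket X Y \<in> K"
    and fS: "finite S" and SG: "S \<subseteq> aut E" and n2: "CARD('n) \<ge> 2"
    and single: "\<forall>\<sigma>\<in>S. P1 \<sigma> K = sl_C"
    and pair: "\<forall>\<sigma>\<in>S. \<forall>\<tau>\<in>S. \<sigma> \<noteq> \<tau> \<longrightarrow> P2 \<sigma> \<tau> K = sl_C \<times> sl_C"
  shows "card S * (CARD('n)^2 - 1) \<le> qdim K"
proof -
  have hom: "field_hom_on E \<rho>" if "\<rho> \<in> S" for \<rho> using that SG aut_hom by blast
  have KME: "X \<in> ME E" if "X \<in> K" for X using that KE slE_ME[OF sf] by blast
  define \<Phi> :: "complex^'n^'n \<Rightarrow> (complex \<Rightarrow> complex) \<Rightarrow> complex^'n^'n"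
    where "\<Phi> X = (\<lambda>\<rho>. if \<rho> \<in> S then apply_emb \<rho> X else 0)" for X
  define L where "L = fs.span (\<Phi> ` K)"
  have \<Phi>0: "\<Phi> 0 = 0" by (auto simp: \<Phi>_def fun_eq_iff ae_zero[OF sf hom])
  have \<Phi>add: "\<Phi> (X + Y) = \<Phi> X + \<Phi> Y" if "X \<in> K" "Y \<in> K" for X Y
    using ae_add[OF sf hom] KME that by (auto simp: \<Phi>_def fun_eq_iff)
  have \<Phi>scale: "\<Phi> (qscale q X) = fscale (of_rat q) (\<Phi> X)" if "X \<in> K" for q X
    using ae_qscale[OF sf hom] KME that by (auto simp: \<Phi>_def fun_eq_iff fscale_def)
  have \<Phi>br: "\<Phi> (bracket X Y) = (\<lambda>\<rho>. bracket (\<Phi> X \<rho>) (\<Phi> Y \<rho>))" if "X \<in> K" "Y \<in> K" for X Y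
    using ae_bracket[OF sf hom] KME that by (auto simp: \<Phi>_def fun_eq_iff)
  have Lsp: "fs.subspace L" by (simp add: L_def fs.subspace_span)
  have Lcomp: "x \<rho> \<in> sl_C" "\<rho> \<notin> S \<Longrightarrow> x \<rho> = 0" if "x \<in> L" for x :: "(complex \<Rightarrow> complex) \<Rightarrow> complex^'n^'n" and \<rho>
  proof -
    define Q :: "((complex \<Rightarrow> complex) \<Rightarrow> complex^'n^'n) set" where "Q = {x. \<forall>\<rho>. (\<rho> \<in> S \<longrightarrow> x \<rho> \<in> sl_C) \<and> (\<rho> \<notin> S \<longrightarrow> x \<rho> = 0)}"
    have "fs.subspace Q"
      unfolding fs.subspace_def Q_def by (auto simp: sl_zero sl_add sl_scale fscale_def)
    moreover have "\<Phi> ` K \<subseteq> Q"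
    proof
      fix v assume "v \<in> \<Phi> ` K"
      then obtain X where X: "X \<in> K" "v = \<Phi> X" by blast
      then have XE: "X \<in> sl_E E" using KE by blast
      show "v \<in> Q" unfolding Q_def X(2) \<Phi>_def using ae_sl[OF sf hom XE] sl_zero by auto
    qed
    ultimately have "L \<subseteq> Q" unfolding L_def by (rule fs.span_minimal[rotated])
    then have "x \<in> Q" using that by blast
    then show "\<rho> \<notin> S \<Longrightarrow> x \<rho> = 0" by (simp add: Q_def)
    show "x \<rho> \<in> sl_C" using \<open>x \<in> Q\<close> sl_zero unfolding Q_def by (cases "\<rho> \<in> S") auto
  qed
  define br :: "((complex \<Rightarrow> complex) \<Rightarrow> complex^'n^'n) \<Rightarrow> _ \<Rightarrow> _"
    where "br x y = (\<lambda>\<rho>. bracket (x \<rho>) (y \<rho>))" for x y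
  have br0: "br u 0 = 0" for u by (simp add: br_def fun_eq_iff)
  have br0': "br 0 y = 0" for y by (simp add: br_def fun_eq_iff)
  have bradd: "br u (y + z) = br u y + br u z" for u y z
    by (simp add: br_def fun_eq_iff bracket_add_right)
  have bradd': "br (x + y) z = br x z + br y z" for x y z
    by (simp add: br_def fun_eq_iff bracket_add_left)
  have brscale: "br u (fscale c y) = fscale c (br u y)" for u c y
    by (simp add: br_def fscale_def fun_eq_iff bracket_scale_right)
  have brscale': "br (fscale c x) y = fscale c (br x y)" for x c y
    by (simp add: br_def fscale_def fun_eq_iff bracket_scale_left)
  have br_sub_r: "fs.subspace {y. br u y \<in> L}" for u
    unfolding fs.subspace_def
    by (simp add: br0 bradd brscale fs.subspace_0[OF Lsp] fs.subspace_add[OF Lsp] fs.subspace_scale[OF Lsp])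
  have br_sub_l: "fs.subspace {x. br x y \<in> L}" for y
    unfolding fs.subspace_def
    by (simp add: br0' bradd' brscale' fs.subspace_0[OF Lsp] fs.subspace_add[OF Lsp] fs.subspace_scale[OF Lsp])
  have br1: "br u y \<in> L" if uK: "u \<in> \<Phi> ` K" and yL: "y \<in> L" for u y
  proof -
    have "\<Phi> ` K \<subseteq> {y. br u y \<in> L}"
    proof
      fix v assume "v \<in> \<Phi> ` K"
      then obtain X Y where "X \<in> K" "Y \<in> K" "u = \<Phi> X" "v = \<Phi> Y" using uK by blast
      then have "br u v = \<Phi> (bracket X Y)" by (simp add: \<Phi>br br_def)
      moreover have "\<Phi> (bracket X Y) \<in> L"
        using Kbr \<open>X \<in> K\<close> \<open>Y \<in> K\<close> by (auto simp: L_def intro: fs.span_base)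
      ultimately show "v \<in> {y. br u y \<in> L}" by simp
    qed
    then have "L \<subseteq> {y. br u y \<in> L}" by (subst (1) L_def) (rule fs.span_minimal[OF _ br_sub_r])
    then show ?thesis using yL by blast
  qed
  have Lbr: "br x y \<in> L" if "x \<in> L" "y \<in> L" for x y
  proof -
    have "\<Phi> ` K \<subseteq> {x. br x y \<in> L}" using br1 that(2) by blast
    then have "L \<subseteq> {x. br x y \<in> L}" by (subst (1) L_def) (rule fs.span_minimal[OF _ br_sub_l])
    then show ?thesis using that by blast
  qed
  have sing: "\<exists>x\<in>L. x \<sigma> = a" if "\<sigma> \<in> S" "a \<in> sl_C" for \<sigma> a
  proof -
    have "(\<lambda>x. x \<sigma>) ` \<Phi> ` K = apply_emb \<sigma> ` K" using that by (auto simp: \<Phi>_def image_image)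
    then have "P1 \<sigma> K = (\<lambda>x. x \<sigma>) ` L"
      using module_hom.span_image[OF ev_hom[of \<sigma>], of "\<Phi> ` K"] by (simp add: P1_def L_def)
    moreover have "P1 \<sigma> K = sl_C" using single that(1) by blast
    ultimately have eq: "sl_C = (\<lambda>x. x \<sigma>) ` L" by simp
    have "a \<in> (\<lambda>x. x \<sigma>) ` L" using that(2) by (subst eq[symmetric])
    then show ?thesis by force
  qed
  have pr: "\<exists>x\<in>L. x \<sigma> = a \<and> x \<tau> = b"
    if "\<sigma> \<in> S" "\<tau> \<in> S" "\<sigma> \<noteq> \<tau>" "a \<in> sl_C" "b \<in> sl_C" for \<sigma> \<tau> a b
  proof -
    have "(\<lambda>x. (x \<sigma>, x \<tau>)) ` \<Phi> ` K = (\<lambda>X. (apply_emb \<sigma> X, apply_emb \<tau> X)) ` K"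
      using that by (auto simp: \<Phi>_def image_image)
    then have "P2 \<sigma> \<tau> K = (\<lambda>x. (x \<sigma>, x \<tau>)) ` L"
      using module_hom.span_image[OF ev2_hom[of \<sigma> \<tau>], of "\<Phi> ` K"] by (simp add: P2_def L_def)
    moreover have "P2 \<sigma> \<tau> K = sl_C \<times> sl_C" using pair that(1,2,3) by blast
    ultimately have eq: "sl_C \<times> sl_C = (\<lambda>x. (x \<sigma>, x \<tau>)) ` L" by simp
    have "(a, b) \<in> sl_C \<times> sl_C" using that(4,5) by simp
    then have "(a, b) \<in> (\<lambda>x. (x \<sigma>, x \<tau>)) ` L" by (subst eq[symmetric])
    then show ?thesis by force
  qed
  have G: "\<forall>g. (\<forall>\<sigma>\<in>S. g \<sigma> \<in> sl_C) \<longrightarrow> (\<exists>x\<in>L. \<forall>\<sigma>\<in>S. x \<sigma> = g \<sigma>)"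
  proof (rule goursat[OF n2, where L = L and S = S and T = S])
    show "0 \<in> L" using fs.subspace_0[OF Lsp] .
    show "x + y \<in> L" if "x \<in> L" "y \<in> L" for x y using fs.subspace_add[OF Lsp] that .
    show "(\<lambda>\<rho>. cscale c (x \<rho>)) \<in> L" if "x \<in> L" for c x
      using fs.subspace_scale[OF Lsp that, of c] by (simp add: fscale_def)
    show "(\<lambda>\<rho>. bracket (x \<rho>) (y \<rho>)) \<in> L" if "x \<in> L" "y \<in> L" for x y
      using Lbr[OF that] by (simp add: br_def)
    show "x \<rho> \<in> sl_C" if "x \<in> L" "\<rho> \<in> S" for x \<rho> using Lcomp(1)[OF that(1)] by simp
    show "\<exists>x\<in>L. x \<sigma> = a" if "\<sigma> \<in> S" "a \<in> sl_C" for \<sigma> a using sing[OF that] .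
    show "\<exists>x\<in>L. x \<sigma> = a \<and> x \<tau> = b"
      if "\<sigma> \<in> S" "\<tau> \<in> S" "\<sigma> \<noteq> \<tau>" "a \<in> sl_C" "b \<in> sl_C" for \<sigma> \<tau> a b using pr[OF that] .
  qed (use fS in auto)
  define U :: "'n \<times> 'n \<Rightarrow> complex^'n^'n"
    where "U p = (if fst p = snd p then Em (fst p) (fst p) - Em nn nn else Em (fst p) (snd p))" for p
  define P :: "('n \<times> 'n) set" where "P = UNIV - {(nn, nn)}"
  define Ix where "Ix = S \<times> P"
  define bf :: "(complex \<Rightarrow> complex) \<times> ('n \<times> 'n) \<Rightarrow> (complex \<Rightarrow> complex) \<Rightarrow> complex^'n^'n"
    where "bf t = (\<lambda>\<rho>. if \<rho> = fst t then U (snd t) else 0)" for t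
  have Usl: "U p \<in> sl_C" if "p \<in> P" for p
    using that by (auto simp: U_def P_def intro!: Em_sl Em_diff_sl)
  have Unth: "U p $ i0 $ j0 = (if p = (i0, j0) then 1 else 0)" if "p \<in> P" "(i0, j0) \<in> P" for p i0 j0
    using U_nth[of p i0 j0] that by (simp add: U_def P_def)
  have bfL: "bf t \<in> L" if "t \<in> Ix" for t
  proof -
    have "\<forall>\<sigma>\<in>S. bf t \<sigma> \<in> sl_C" using that Usl sl_zero by (auto simp: bf_def Ix_def)
    then obtain x where x: "x \<in> L" "\<forall>\<sigma>\<in>S. x \<sigma> = bf t \<sigma>" using G by blast
    have "x = bf t"
    proof
      fix \<rho> show "x \<rho> = bf t \<rho>"
      proof (cases "\<rho> \<in> S")
        case True then show ?thesis using x by simp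
      next
        case False
        then have "\<rho> \<noteq> fst t" using that by (auto simp: Ix_def)
        then show ?thesis using False Lcomp(2)[OF x(1)] by (simp add: bf_def)
      qed
    qed
    then show ?thesis using x by simp
  qed
  have bfnth: "bf t \<sigma> $ i0 $ j0 = (if t = (\<sigma>, (i0, j0)) then 1 else 0)"
    if "t \<in> Ix" "(i0, j0) \<in> P" for t \<sigma> i0 j0
    using that Unth[of "snd t" i0 j0] by (cases t) (auto simp: bf_def Ix_def)
  have inj: "inj_on bf Ix"
  proof
    fix t t' assume t: "t \<in> Ix" "t' \<in> Ix" "bf t = bf t'"
    obtain \<sigma> i0 j0 where tt: "t = (\<sigma>, (i0, j0))" by (cases t) auto
    have p: "(i0, j0) \<in> P" using t(1) tt by (simp add: Ix_def)
    have 1: "bf t \<sigma> $ i0 $ j0 = 1" using bfnth[OF t(1) p, of \<sigma>] tt by simp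
    have 2: "bf t' \<sigma> $ i0 $ j0 = (if t' = t then 1 else 0)" using bfnth[OF t(2) p, of \<sigma>] tt by simp
    have "bf t' \<sigma> $ i0 $ j0 = 1" using 1 t(3) by simp
    then show "t = t'" using 2 by (simp split: if_splits)
  qed
  have fIx: "finite Ix" using fS by (simp add: Ix_def)
  have indep: "fs.independent (bf ` Ix)"
  proof (rule fs.independent_if_scalars_zero)
    show "finite (bf ` Ix)" using fIx by simp
    fix c v assume sum0: "(\<Sum>x\<in>bf ` Ix. fscale (c x) x) = 0" and v: "v \<in> bf ` Ix"
    obtain t where t: "t \<in> Ix" "v = bf t" using v by blast
    obtain \<sigma> i0 j0 where tt: "t = (\<sigma>, (i0, j0))" by (cases t) auto
    have p0: "(i0, j0) \<in> P" using t(1) tt by (simp add: Ix_def)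
    have "(\<Sum>s\<in>Ix. fscale (c (bf s)) (bf s)) = 0"
      using sum0 by (simp add: sum.reindex[OF inj])
    then have "(\<Sum>s\<in>Ix. fscale (c (bf s)) (bf s)) \<sigma> $ i0 $ j0 = 0" by simp
    then have "(\<Sum>s\<in>Ix. c (bf s) * (bf s \<sigma> $ i0 $ j0)) = 0"
      by (simp add: fun_sum_apply fscale_def)
    moreover have "c (bf s) * (bf s \<sigma> $ i0 $ j0) = (if s = t then c (bf s) else 0)" if "s \<in> Ix" for s
      using bfnth[OF that p0] tt by simp
    ultimately have "(\<Sum>s\<in>Ix. if s = t then c (bf s) else 0) = 0" by simp
    then show "c v = 0" using t fIx by simp
  qed
  have cardIx: "card (bf ` Ix) = card S * (CARD('n)^2 - 1)"
  proof -
    have "card P = CARD('n)^2 - 1" by (simp add: P_def card_Diff_singleton card_UNIV power2_eq_square)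
    then show ?thesis using card_image[OF inj] by (simp add: Ix_def card_cartesian_product)
  qed
  obtain F0 where F0: "finite F0" "(ME E :: (complex^'n^'n) set) \<subseteq> qs.span F0"
    using ME_span[OF sf fo] by blast
  obtain BK where BK: "BK \<subseteq> K" "qs.independent BK" "K \<subseteq> qs.span BK"
    using qs.maximal_independent_subset[of K] by blast
  have "BK \<subseteq> qs.span F0" using BK(1) KME F0(2) by blast
  then have fBK: "finite BK" using qs.independent_span_bound[OF F0(1) BK(2)] by blast
  have dimK: "qdim K = card BK"
    using qs.basis_card_eq_dim[OF BK(1) BK(3) BK(2)] by (simp add: qdim_def)
  have "K \<subseteq> {X \<in> K. \<Phi> X \<in> fs.span (\<Phi> ` BK)}"
  proof -
    have "qs.subspace {X \<in> K. \<Phi> X \<in> fs.span (\<Phi> ` BK)}"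
      unfolding qs.subspace_def
      using qs.subspace_0[OF Ksub] qs.subspace_add[OF Ksub] qs.subspace_scale[OF Ksub]
      by (auto simp: \<Phi>0 \<Phi>add \<Phi>scale fs.span_zero fs.span_add fs.span_scale)
    moreover have "BK \<subseteq> {X \<in> K. \<Phi> X \<in> fs.span (\<Phi> ` BK)}"
      using BK(1) by (auto intro: fs.span_base)
    ultimately have "qs.span BK \<subseteq> {X \<in> K. \<Phi> X \<in> fs.span (\<Phi> ` BK)}"
      by (rule qs.span_minimal[rotated])
    then show ?thesis using BK(3) by blast
  qed
  then have "\<Phi> ` K \<subseteq> fs.span (\<Phi> ` BK)" by blast
  then have "L \<subseteq> fs.span (\<Phi> ` BK)" unfolding L_def by (rule fs.span_minimal[OF _ fs.subspace_span])
  then have "bf ` Ix \<subseteq> fs.span (\<Phi> ` BK)" using bfL by blast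
  moreover have "finite (\<Phi> ` BK)" using fBK by simp
  ultimately have "card (bf ` Ix) \<le> card (\<Phi> ` BK)"
    using fs.independent_span_bound[OF _ indep] by blast
  also have "\<dots> \<le> card BK" using fBK by (rule card_image_le)
  finally show ?thesis using cardIx dimK by simp
qed


theorem lemma2p2:
  fixes E :: "complex set" and K :: "(complex^'n^'n) set"
  assumes "CM_field E"
    and "galois_over_Q E"
    and "semisimple_Q K"
    and "K \<subseteq> sl_E E"
    and "\<exists>\<sigma>0\<in>aut E. P1 \<sigma>0 K = sl_C"
    and "\<forall>\<sigma>\<in>aut E. \<forall>\<tau>\<in>aut E. \<sigma> \<noteq> \<tau> \<and> \<sigma> \<noteq> conj_aut E \<tau> \<longrightarrow>
           (\<exists>\<kappa>\<in>aut E. P2 (\<kappa> \<circ> \<sigma>) (\<kappa> \<circ> \<tau>) K = sl_C \<times> sl_C)"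
  shows "real (qdim K) \<ge> 1/2 * real (qdeg E) * (real (CARD('n))^2 - 1)"
proof -
  have sf: "subfield_C E" and fo: "finite_over_Q E" and cardG: "card (aut E) = qdeg E"
    using assms(2) by (auto simp: galois_over_Q_def)
  have ti: "totally_imaginary E" using assms(1) by (simp add: CM_field_def)
  have lie: "lie_subalgebra_Q K" using assms(3) by (simp add: semisimple_Q_def)
  have Ksub: "qs.subspace K" and Kbr: "\<forall>X\<in>K. \<forall>Y\<in>K. bracket X Y \<in> K"
    using lie by (auto simp: lie_subalgebra_Q_def)
  show ?thesis
  proof (cases "CARD('n) \<ge> 2 \<and> qdeg E > 0")
    case False
    have c1: "0 < CARD('n)" by simp
    have "CARD('n) = 1 \<or> qdeg E = 0"
    proof (cases "2 \<le> CARD('n)")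
      case True
      then show ?thesis using False by simp
    next
      case False
      then show ?thesis using c1 by linarith
    qed
    then have eq: "1/2 * real (qdeg E) * (real (CARD('n))^2 - 1) = 0" by auto
    have "(0::real) \<le> real (qdim K)" by simp
    then show ?thesis using eq by linarith
  next
    case True
    then have n2: "CARD('n) \<ge> 2" and qpos: "qdeg E > 0" by auto
    have finG: "finite (aut E)" using cardG qpos card.infinite by force
    obtain \<sigma>0 where \<sigma>0: "\<sigma>0 \<in> aut E" "P1 \<sigma>0 K = sl_C" using assms(5) by blast
    have "\<exists>S\<subseteq>aut E. \<sigma>0 \<in> S \<and> card (aut E) \<le> 2 * card S \<and> (\<forall>x\<in>S. conj_aut E x \<notin> S)"
      by (rule pick_half[OF finG \<sigma>0(1)]) (auto simp: conj_aut_ne[OF ti] conj_aut_invol)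
    then obtain S where S: "S \<subseteq> aut E" "\<sigma>0 \<in> S" "card (aut E) \<le> 2 * card S"
        "\<forall>x\<in>S. conj_aut E x \<notin> S" by blast
    have fS: "finite S" using finite_subset[OF S(1) finG] .
    have pairS: "\<forall>\<sigma>\<in>S. \<forall>\<tau>\<in>S. \<sigma> \<noteq> \<tau> \<longrightarrow> P2 \<sigma> \<tau> K = sl_C \<times> sl_C"
    proof (intro ballI impI)
      fix \<sigma> \<tau> assume st: "\<sigma> \<in> S" "\<tau> \<in> S" "\<sigma> \<noteq> \<tau>"
      have stG: "\<sigma> \<in> aut E" "\<tau> \<in> aut E" using st S(1) by auto
      have "\<sigma> \<noteq> conj_aut E \<tau>" using S(4) st by auto
      then obtain \<kappa> where \<kappa>: "\<kappa> \<in> aut E" "P2 (\<kappa> \<circ> \<sigma>) (\<kappa> \<circ> \<tau>) K = sl_C \<times> sl_C"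
        using assms(6) stG st(3) by blast
      show "P2 \<sigma> \<tau> K = sl_C \<times> sl_C" by (rule transport[OF sf stG \<kappa>(1) assms(4) \<kappa>(2)])
    qed
    have singS: "\<forall>\<sigma>\<in>S. P1 \<sigma> K = sl_C"
    proof
      fix \<sigma> assume \<sigma>: "\<sigma> \<in> S"
      show "P1 \<sigma> K = sl_C"
      proof (cases "\<exists>\<tau>\<in>S. \<tau> \<noteq> \<sigma>")
        case True
        then obtain \<tau> where \<tau>: "\<tau> \<in> S" "\<tau> \<noteq> \<sigma>" by blast
        have P2e: "P2 \<sigma> \<tau> K = sl_C \<times> sl_C" using pairS \<sigma> \<tau> by auto
        have "fst ` ((\<lambda>X. (apply_emb \<sigma> X, apply_emb \<tau> X)) ` K) = apply_emb \<sigma> ` K"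
          by (simp add: image_image)
        then have "P1 \<sigma> K = fst ` P2 \<sigma> \<tau> K"
          using module_hom.span_image[OF fst_hom, of "(\<lambda>X. (apply_emb \<sigma> X, apply_emb \<tau> X)) ` K"]
          by (simp add: P1_def P2_def)
        also have "\<dots> = sl_C" using P2e sl_zero by force
        finally show ?thesis .
      next
        case False
        have "\<not> (\<sigma>0 \<in> S \<and> \<sigma>0 \<noteq> \<sigma>)" using False by (intro notI) (elim conjE, rule notE[OF False], rule bexI)
        then have "\<sigma> = \<sigma>0" using S(2) by simp
        then show ?thesis using \<sigma>0(2) by simp
      qed
    qed
    have dimb: "card S * (CARD('n)^2 - 1) \<le> qdim K"
      by (rule dim_bound[OF sf fo assms(4) Ksub Kbr fS S(1) n2 singS pairS])
    have c2: "real (qdeg E) \<le> 2 * real (card S)" using S(3) cardG by simp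
    have n1: "real (CARD('n)^2 - 1) = real (CARD('n))^2 - 1"
      using n2 by (simp add: of_nat_diff)
    have nn0: "real (CARD('n))^2 - 1 \<ge> 0" using n2 by simp
    have "1/2 * real (qdeg E) * (real (CARD('n))^2 - 1) \<le> real (card S) * (real (CARD('n))^2 - 1)"
      using mult_right_mono[OF c2 nn0] by simp
    also have "\<dots> = real (card S * (CARD('n)^2 - 1))" using n1 by simp
    also have "\<dots> \<le> real (qdim K)" using dimb by (simp only: of_nat_le_iff)
    finally show ?thesis .
  qed
qed


end
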